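(* In the standing setting below, let $(u,v)$ be a bounded, decaying, optimal integrable positive solution and suppose $p\frac{n-\beta\gamma}{\gamma-1}-\sigma_2<n$. Then $v(x)\simeq|x|^{-\frac{p\frac{n-\beta\gamma}{\gamma-1}-(\beta\gamma+\sigma_2)}{\gamma-1}}$.
   Context: Standing setting: $n\ge3$, $\beta>0$, $\gamma>1$, $\beta\gamma<n$, $p,q>0$ with $q\ge p$, $pq>(\gamma-1)^2$, $\sigma_1,\sigma_2\in(-\beta\gamma,\infty)$ with $\sigma_1\le\sigma_2$, $q_0+p_0\le\frac{n-\beta\gamma}{\gamma-1}$ where $q_0=\frac{\beta\gamma(\gamma-1+q)+(\gamma-1)\sigma_1+\sigma_2 q}{pq-(\gamma-1)^2}$, $p_0=\frac{\beta\gamma(\gamma-1+p)+(\gamma-1)\sigma_2+\sigma_1 p}{pq-(\gamma-1)^2}$; $c_1,c_2$ are double bounded (i.e. $1/C\le c_i(x)\le C$ for some $C>0$), and $(u,v)$ is a positive solution (nonnegative $L^1_{loc}$ functions, positive, satisfying the equations a.e.) of $u(x)=c_1(x)W_{\beta,\gamma}(|y|^{\sigma_1}v^q)(x)$, $v(x)=c_2(x)W_{\beta,\gamma}(|y|^{\sigma_2}u^p)(x)$, where $W_{\beta,\gamma}(f)(x)=\int_0^\infty\Big(\frac{\int_{B_t(x)}f(y)\,dy}{t^{n-\beta\gamma}}\Big)^{\frac{1}{\gamma-1}}\frac{dt}{t}$. For positive $f$, $f(x)\simeq g(x)$ means $1/c\le f(x)/g(x)\le c$ for some $c>0$ and all sufficiently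 large $|x|$; decaying means $u\simeq|x|^{-\theta_1}$, $v\simeq|x|^{-\theta_2}$ for some $\theta_1,\theta_2>0$. Optimal integrable means $(u,v)\in L^r\times L^s$ for all $r>\frac{n(\gamma-1)}{n-\beta\gamma}$ and $s>\max\big\{\frac{n(\gamma-1)}{n-\beta\gamma},\frac{n(\gamma-1)}{p\frac{n-\beta\gamma}{\gamma-1}-(\beta\gamma+\sigma_2)}\big\}$. *)

theory Defs
  imports "HOL-Analysis.Analysis"
begin

definition enn_rpow :: "ennreal \<Rightarrow> real \<Rightarrow> ennreal" where
  "enn_rpow a r = (if a = \<infinity> then \<infinity> else ennreal (enn2real a powr r))"

definition wolff :: "real \<Rightarrow> real \<Rightarrow> (real^'n \<Rightarrow> real) \<Rightarrow> real^'n \<Rightarrow> ennreal" where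
  "wolff \<beta> \<gamma> f x =
     (\<integral>\<^sup>+ t. indicator {0<..} t *
        (enn_rpow ((\<integral>\<^sup>+ y. indicator (ball x t) y * ennreal (f y) \<partial>lebesgue)
                     / ennreal (t powr (real CARD('n) - \<beta> * \<gamma>))) (1 / (\<gamma> - 1))
         / ennreal t) \<partial>lborel)"

definition asymp_simeq :: "(real^'n \<Rightarrow> real) \<Rightarrow> (real^'n \<Rightarrow> real) \<Rightarrow> bool" where
  "asymp_simeq f g \<longleftrightarrow> (\<exists>c>0. \<exists>R. \<forall>x. norm x \<ge> R \<longrightarrow>
       1 / c \<le> f x / g x \<and> f x / g x \<le> c)"

definition double_bounded :: "(real^'n \<Rightarrow> real) \<Rightarrow> bool" where
  "double_bounded c \<longleftrightarrow> (\<exists>C>0. \<forall>x. 1 / C \<le> c x \<and> c x \<le> C)"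

definition in_Lp :: "real \<Rightarrow> (real^'n \<Rightarrow> real) \<Rightarrow> bool" where
  "in_Lp r f \<longleftrightarrow> f \<in> borel_measurable lebesgue \<and> integrable lebesgue (\<lambda>x. \<bar>f x\<bar> powr r)"

definition locally_integrable :: "(real^'n \<Rightarrow> real) \<Rightarrow> bool" where
  "locally_integrable f \<longleftrightarrow> f \<in> borel_measurable lebesgue \<and>
      (\<forall>K. compact K \<longrightarrow> set_integrable lebesgue K f)"

definition positive_solution ::
  "real \<Rightarrow> real \<Rightarrow> real \<Rightarrow> real \<Rightarrow> real \<Rightarrow> real \<Rightarrow> (real^'n \<Rightarrow> real) \<Rightarrow> (real^'n \<Rightarrow> real)
    \<Rightarrow> (real^'n \<Rightarrow> real) \<Rightarrow> (real^'n \<Rightarrow> real) \<Rightarrow> bool" where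
  "positive_solution \<beta> \<gamma> p q \<sigma>\<^sub>1 \<sigma>\<^sub>2 c\<^sub>1 c\<^sub>2 u v \<longleftrightarrow>
     locally_integrable u \<and> locally_integrable v \<and>
     (\<forall>x. u x > 0) \<and> (\<forall>x. v x > 0) \<and>
     (AE x in lebesgue. ennreal (u x) =
        ennreal (c\<^sub>1 x) * wolff \<beta> \<gamma> (\<lambda>y. norm y powr \<sigma>\<^sub>1 * v y powr q) x) \<and>
     (AE x in lebesgue. ennreal (v x) =
        ennreal (c\<^sub>2 x) * wolff \<beta> \<gamma> (\<lambda>y. norm y powr \<sigma>\<^sub>2 * u y powr p) x)"

end

theory Submission imports Defs begin

lemma emeasure_lebesgue_ball:
  "r \<ge> 0 \<Longrightarrow> emeasure lebesgue (ball (c::real^'n) r) = ennreal (unit_ball_vol CARD('n) * r ^ CARD('n))"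
  by (simp add: emeasure_ball)

lemma annulus_meas:
  assumes "\<rho> > 0"
  shows "emeasure lebesgue (ball (0::real^'n) (2*\<rho>) - ball 0 \<rho>) =
     ennreal (unit_ball_vol CARD('n) * (2^CARD('n) - 1) * \<rho>^CARD('n))"
proof -
  have "emeasure lebesgue (ball (0::real^'n) (2*\<rho>) - ball 0 \<rho>) =
     emeasure lebesgue (ball (0::real^'n) (2*\<rho>)) - emeasure lebesgue (ball (0::real^'n) \<rho>)"
    using assms by (intro emeasure_Diff) (auto simp: emeasure_lebesgue_ball emeasure_ball)
  also have "\<dots> = ennreal (unit_ball_vol CARD('n) * (2*\<rho>) ^ CARD('n) - unit_ball_vol CARD('n) * \<rho> ^ CARD('n))"
    using assms by (simp only: emeasure_lebesgue_ball) (rule ennreal_minus, simp)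
  also have "unit_ball_vol CARD('n) * (2*\<rho>) ^ CARD('n) - unit_ball_vol CARD('n) * \<rho> ^ CARD('n)
     = unit_ball_vol CARD('n) * (2^CARD('n) - 1) * \<rho>^CARD('n)"
    by (simp add: power_mult_distrib algebra_simps)
  finally show ?thesis .
qed

definition VV :: "'n itself \<Rightarrow> real" where
  "VV _ = unit_ball_vol CARD('n) * (2^CARD('n) - 1)"

lemma VV_pos: "VV TYPE('n::finite) > 0"
proof -
  have "(1::real) < 2^CARD('n)" by (rule one_less_power) (auto simp: zero_less_card_finite)
  thus ?thesis unfolding VV_def by simp
qed

lemma annulus_integral:
  fixes g :: "real^'n \<Rightarrow> ennreal"
  assumes "\<rho> > 0" "m \<ge> 0" "\<And>y. \<rho> \<le> norm y \<Longrightarrow> norm y < 2*\<rho> \<Longrightarrow> ennreal m \<le> g y"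
  shows "ennreal (m * VV TYPE('n) * \<rho>^CARD('n)) \<le> (\<integral>\<^sup>+ y. g y \<partial>lebesgue)"
proof -
  let ?A = "ball (0::real^'n) (2*\<rho>) - ball 0 \<rho>"
  have "ennreal (m * VV TYPE('n) * \<rho>^CARD('n)) = ennreal m * emeasure lebesgue ?A"
    using assms VV_pos[where 'n='n] by (simp only: annulus_meas[OF assms(1)] VV_def)
       (simp add: ennreal_mult' mult.assoc)
  also have "\<dots> = (\<integral>\<^sup>+ y. ennreal m * indicator ?A y \<partial>lebesgue)"
    by (rule nn_integral_cmult_indicator[symmetric]) auto
  also have "\<dots> \<le> (\<integral>\<^sup>+ y. g y \<partial>lebesgue)"
    by (intro nn_integral_mono) (auto simp: indicator_def intro!: assms(3))
  finally show ?thesis .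
qed

lemma AE_large:
  assumes "AE x in lebesgue. P x"
  shows "\<exists>x::real^'n. norm x \<ge> R \<and> P x"
proof (rule ccontr)
  assume H: "\<not> ?thesis"
  from assms obtain N where N: "{x \<in> space lebesgue. \<not> P x} \<subseteq> N" "emeasure lebesgue N = 0" "N \<in> sets lebesgue"
    by (rule AE_E)
  obtain c :: "real^'n" where c: "norm c = \<bar>R\<bar> + 1" using vector_choose_size[of "\<bar>R\<bar>+1"] by auto
  have "ball c 1 \<subseteq> N"
  proof
    fix y assume "y \<in> ball c 1"
    hence "norm y > \<bar>R\<bar>" using c norm_triangle_ineq2[of c y] by (auto simp: dist_norm norm_minus_commute)
    hence "\<not> P y" using H by auto
    thus "y \<in> N" using N by auto
  qed
  hence "emeasure lebesgue (ball c 1) \<le> emeasure lebesgue N" using N by (intro emeasure_mono) auto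
  moreover have "emeasure lebesgue (ball c 1) > 0" by (simp add: emeasure_ball)
  ultimately show False using N by simp
qed

lemma exponent_compare:
  fixes a b K C :: real
  assumes "K > 0" "C > 0" "\<And>R. \<exists>r. r \<ge> R \<and> r > 0 \<and> K * r powr a \<le> C * r powr b"
  shows "a \<le> b"
proof (rule ccontr)
  assume "\<not> a \<le> b"
  hence ab: "a - b > 0" by simp
  define R where "R = max 1 ((C/K + 1) powr (1/(a-b)))"
  obtain r where r: "r \<ge> R" "r > 0" "K * r powr a \<le> C * r powr b" using assms(3) by blast
  have "r powr (a - b) \<le> C / K"
    using r assms by (simp add: powr_diff field_simps)
  moreover have "r powr (a-b) \<ge> R powr (a-b)" using r ab by (intro powr_mono2) (auto simp: R_def)
  moreover have "R powr (a-b) \<ge> ((C/K + 1) powr (1/(a-b))) powr (a-b)"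
    using ab assms by (intro powr_mono2) (auto simp: R_def)
  moreover have "((C/K + 1) powr (1/(a-b))) powr (a-b) = C/K + 1"
    using ab assms by (simp add: powr_powr)
  ultimately show False by simp
qed

lemma not_integrable_power:
  fixes g :: "real^'n \<Rightarrow> real"
  assumes c: "c > 0" and al: "0 \<le> \<alpha>" "\<alpha> < real CARD('n)"
    and lb: "\<And>y. norm y \<ge> R \<Longrightarrow> c * norm y powr (-\<alpha>) \<le> g y"
    and int: "integrable lebesgue g"
  shows False
proof -
  from int have fin: "(\<integral>\<^sup>+x. ennreal (norm (g x)) \<partial>lebesgue) < \<infinity>"
    by (simp add: integrable_iff_bounded)
  define F where "F = enn2real (\<integral>\<^sup>+x. ennreal (norm (g x)) \<partial>lebesgue)"
  have F: "(\<integral>\<^sup>+x. ennreal (norm (g x)) \<partial>lebesgue) = ennreal F" "F \<ge> 0"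
    using fin by (auto simp: F_def less_top intro!: ennreal_enn2real[symmetric])
  define K where "K = c * 2 powr (-\<alpha>) * VV TYPE('n)"
  have K: "K > 0" using c VV_pos[where 'n='n] by (simp add: K_def)
  have "real CARD('n) - \<alpha> \<le> 0"
  proof (rule exponent_compare[OF K, of "F+1"])
    show "F + 1 > 0" using F by simp
    fix R' :: real
    define r where "r = max (max R' 1) (max R 1)"
    have r: "r \<ge> R'" "r > 0" "r \<ge> R" by (auto simp: r_def)
    have "ennreal ((c * (2*r) powr (-\<alpha>)) * VV TYPE('n) * r^CARD('n)) \<le> (\<integral>\<^sup>+x. ennreal (norm (g x)) \<partial>lebesgue)"
    proof (rule annulus_integral)
      show "0 < r" by (rule r)
      show "0 \<le> c * (2 * r) powr - \<alpha>" using c by simp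
      fix y :: "real^'n" assume y: "r \<le> norm y" "norm y < 2*r"
      have "c * (2 * r) powr - \<alpha> \<le> c * norm y powr (-\<alpha>)"
        using y r c al by (intro mult_left_mono powr_mono2') auto
      also have "\<dots> \<le> g y" using lb y r by auto
      also have "\<dots> \<le> norm (g y)" by simp
      finally show "ennreal (c * (2 * r) powr - \<alpha>) \<le> ennreal (norm (g y))" by (rule ennreal_leI)
    qed
    hence le: "(c * (2*r) powr (-\<alpha>)) * VV TYPE('n) * r^CARD('n) \<le> F"
      using F by (auto simp: ennreal_le_iff2)
    have "(c * (2*r) powr (-\<alpha>)) * VV TYPE('n) * r^CARD('n) = K * r powr (real CARD('n) - \<alpha>)"
      using r by (simp add: K_def powr_mult powr_diff powr_minus powr_realpow field_simps)
    with le show "\<exists>r. r \<ge> R' \<and> r > 0 \<and> K * r powr (real CARD('n) - \<alpha>) \<le> (F+1) * r powr 0"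
      using r by (intro exI[of _ r]) auto
  qed
  with al show False by simp
qed

lemma ennreal_div_lower:
  assumes "0 < b" "b \<le> c" "ennreal a \<le> I" "0 \<le> a"
  shows "ennreal (a / c) \<le> I / ennreal b"
proof (cases I)
  case (real i)
  with assms have "a \<le> i" "0 \<le> i" by (auto simp: ennreal_le_iff2)
  hence "a / c \<le> i / b" using assms by (intro frac_le) auto
  thus ?thesis using real assms by (simp add: divide_ennreal)
next
  case top
  then show ?thesis using assms by (simp add: ennreal_top_divide)
qed

lemma enn_rpow_lower:
  assumes "ennreal a \<le> I" "0 \<le> a" "0 < s"
  shows "ennreal (a powr s) \<le> enn_rpow I s"
proof (cases "I = \<infinity>")
  case True then show ?thesis by (simp add: enn_rpow_def)
next
  case False
  then obtain i where i: "I = ennreal i" "0 \<le> i" by (cases I) auto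
  with assms have "a \<le> i" by (auto simp: ennreal_le_iff2)
  hence "a powr s \<le> i powr s" using assms by (intro powr_mono2) auto
  thus ?thesis using i False by (simp add: enn_rpow_def)
qed

lemma wolff_lower:
  fixes f :: "real^'n \<Rightarrow> real" and x :: "real^'n"
  assumes r: "r > 0" and g: "\<gamma> > 1" and d: "\<beta> * \<gamma> < real CARD('n)" and A: "A > 0"
    and I: "\<And>t. 2*r \<le> t \<Longrightarrow> t \<le> 4*r \<Longrightarrow>
      ennreal (A * r powr E) \<le> (\<integral>\<^sup>+ y. indicator (ball x t) y * ennreal (f y) \<partial>lebesgue)"
  shows "ennreal ((A * 4 powr (-(real CARD('n) - \<beta> * \<gamma>))) powr (1/(\<gamma>-1)) / 2
           * r powr ((E - (real CARD('n) - \<beta> * \<gamma>))/(\<gamma>-1))) \<le> wolff \<beta> \<gamma> f x"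
proof -
  define dd where "dd = real CARD('n) - \<beta> * \<gamma>"
  have dpos: "dd > 0" using d by (simp add: dd_def)
  define L0 where "L0 = ((A * r powr E / (4*r) powr dd) powr (1/(\<gamma>-1))) / (4*r)"
  have L0: "L0 \<ge> 0" unfolding L0_def using r by simp
  have pt: "ennreal L0 * indicator {2*r..4*r} t \<le>
      indicator {0<..} t *
        (enn_rpow ((\<integral>\<^sup>+ y. indicator (ball x t) y * ennreal (f y) \<partial>lebesgue)
                     / ennreal (t powr (real CARD('n) - \<beta> * \<gamma>))) (1 / (\<gamma> - 1))
         / ennreal t)" for t
  proof (cases "2*r \<le> t \<and> t \<le> 4*r")
    case True
    hence t: "t > 0" using r by auto
    have "ennreal (A * r powr E / (4*r) powr dd) \<le>
       (\<integral>\<^sup>+ y. indicator (ball x t) y * ennreal (f y) \<partial>lebesgue) / ennreal (t powr dd)"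
      using True t A r dpos by (intro ennreal_div_lower I powr_mono2) auto
    hence "ennreal ((A * r powr E / (4*r) powr dd) powr (1/(\<gamma>-1))) \<le>
       enn_rpow ((\<integral>\<^sup>+ y. indicator (ball x t) y * ennreal (f y) \<partial>lebesgue) / ennreal (t powr dd)) (1/(\<gamma>-1))"
      using g A r by (intro enn_rpow_lower) auto
    hence "ennreal L0 \<le> enn_rpow ((\<integral>\<^sup>+ y. indicator (ball x t) y * ennreal (f y) \<partial>lebesgue) / ennreal (t powr dd)) (1/(\<gamma>-1)) / ennreal t"
      unfolding L0_def using True t by (intro ennreal_div_lower) auto
    then show ?thesis using True t by (simp add: dd_def)
  next
    case False
    then show ?thesis by simp
  qed
  have "ennreal L0 * ennreal (2*r) = (\<integral>\<^sup>+ t. ennreal L0 * indicator {2*r..4*r} t \<partial>lborel)"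
    using r by (simp add: nn_integral_cmult_indicator)
  also have "\<dots> \<le> wolff \<beta> \<gamma> f x"
    unfolding wolff_def by (intro nn_integral_mono pt)
  finally have W: "ennreal (L0 * (2*r)) \<le> wolff \<beta> \<gamma> f x"
    using L0 r by (simp add: ennreal_mult)
  have "A * r powr E / (4*r) powr dd = (A * 4 powr (-dd)) * r powr (E - dd)"
    using r by (simp add: powr_mult powr_diff powr_minus divide_simps)
  hence "(A * r powr E / (4*r) powr dd) powr (1/(\<gamma>-1)) =
      (A * 4 powr (-dd)) powr (1/(\<gamma>-1)) * r powr ((E - dd)/(\<gamma>-1))"
    using r A by (simp add: powr_mult powr_powr)
  hence "L0 * (2*r) = (A * 4 powr (-dd)) powr (1/(\<gamma>-1)) / 2 * r powr ((E - dd)/(\<gamma>-1))"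
    unfolding L0_def using r by (simp add: field_simps)
  with W show ?thesis by (simp add: dd_def)
qed

lemma ennreal_eq_lower:
  assumes "ennreal a = ennreal c * W" "ennreal L \<le> W" "0 \<le> L" "k \<le> c" "0 \<le> k" "0 \<le> a"
  shows "k * L \<le> a"
proof -
  have "ennreal (k * L) = ennreal k * ennreal L" using assms by (simp add: ennreal_mult)
  also have "\<dots> \<le> ennreal c * W" using assms by (intro mult_mono) auto
  also have "\<dots> = ennreal a" using assms(1) by simp
  finally show ?thesis using assms(6) by (subst (asm) ennreal_le_iff) auto
qed

lemma simeq_bounds:
  assumes "asymp_simeq f (\<lambda>x. norm x powr (- \<theta>))"
  obtains c R where "c > 0" "R \<ge> 1" "\<And>x. norm x \<ge> R \<Longrightarrow>
     (1/c) * norm x powr (- \<theta>) \<le> f x \<and> f x \<le> c * norm x powr (- \<theta>)"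
proof -
  from assms obtain c R where c: "c > 0" and R: "\<And>x. norm x \<ge> R \<Longrightarrow>
       1 / c \<le> f x / norm x powr (- \<theta>) \<and> f x / norm x powr (- \<theta>) \<le> c"
    unfolding asymp_simeq_def by blast
  show ?thesis
  proof (rule that[OF c, of "max R 1"])
    fix x :: "real^'a" assume x: "norm x \<ge> max R 1"
    hence pos: "norm x powr (- \<theta>) > 0" by auto
    from R[of x] x have "1 / c \<le> f x / norm x powr (- \<theta>)" "f x / norm x powr (- \<theta>) \<le> c" by auto
    thus "(1/c) * norm x powr (- \<theta>) \<le> f x \<and> f x \<le> c * norm x powr (- \<theta>)"
      using pos by (simp add: field_simps)
  qed auto
qed

theorem proposition8:
  fixes u v c\<^sub>1 c\<^sub>2 :: "real^'n \<Rightarrow> real"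
    and \<beta> \<gamma> p q \<sigma>\<^sub>1 \<sigma>\<^sub>2 :: real
  defines "n \<equiv> real CARD('n)"
  defines "q\<^sub>0 \<equiv> (\<beta> * \<gamma> * (\<gamma> - 1 + q) + (\<gamma> - 1) * \<sigma>\<^sub>1 + \<sigma>\<^sub>2 * q) / (p * q - (\<gamma> - 1)^2)"
  defines "p\<^sub>0 \<equiv> (\<beta> * \<gamma> * (\<gamma> - 1 + p) + (\<gamma> - 1) * \<sigma>\<^sub>2 + \<sigma>\<^sub>1 * p) / (p * q - (\<gamma> - 1)^2)"
  assumes n3: "CARD('n) \<ge> 3"
    and beta: "\<beta> > 0" and gamma: "\<gamma> > 1" and bg: "\<beta> * \<gamma> < n"
    and pq_pos: "p > 0" "q > 0" and qp: "q \<ge> p" and pq: "p * q > (\<gamma> - 1)^2"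
    and sig: "\<sigma>\<^sub>1 > - (\<beta> * \<gamma>)" "\<sigma>\<^sub>2 > - (\<beta> * \<gamma>)" "\<sigma>\<^sub>1 \<le> \<sigma>\<^sub>2"
    and q0p0: "q\<^sub>0 + p\<^sub>0 \<le> (n - \<beta> * \<gamma>) / (\<gamma> - 1)"
    and c1: "double_bounded c\<^sub>1" and c2: "double_bounded c\<^sub>2"
    and sol: "positive_solution \<beta> \<gamma> p q \<sigma>\<^sub>1 \<sigma>\<^sub>2 c\<^sub>1 c\<^sub>2 u v"
    and bdd: "bounded (range u)" "bounded (range v)"
    and decay: "\<exists>\<theta>\<^sub>1>0. \<exists>\<theta>\<^sub>2>0. asymp_simeq u (\<lambda>x. norm x powr (- \<theta>\<^sub>1))
                                 \<and> asymp_simeq v (\<lambda>x. norm x powr (- \<theta>\<^sub>2))"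
    and optint_u: "\<And>r. r > n * (\<gamma> - 1) / (n - \<beta> * \<gamma>) \<Longrightarrow> in_Lp r u"
    and optint_v: "\<And>s. s > max (n * (\<gamma> - 1) / (n - \<beta> * \<gamma>))
                       (n * (\<gamma> - 1) / (p * (n - \<beta> * \<gamma>) / (\<gamma> - 1) - (\<beta> * \<gamma> + \<sigma>\<^sub>2)))
                    \<Longrightarrow> in_Lp s v"
    and hyp: "p * (n - \<beta> * \<gamma>) / (\<gamma> - 1) - \<sigma>\<^sub>2 < n"
  shows "asymp_simeq v (\<lambda>x. norm x powr
           (- ((p * (n - \<beta> * \<gamma>) / (\<gamma> - 1) - (\<beta> * \<gamma> + \<sigma>\<^sub>2)) / (\<gamma> - 1))))"
proof -
  define d where "d = n - \<beta> * \<gamma>"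
  define a where "a = d / (\<gamma> - 1)"
  define k where "k = p * (n - \<beta> * \<gamma>) / (\<gamma> - 1) - (\<beta> * \<gamma> + \<sigma>\<^sub>2)"
  have dpos: "d > 0" using bg by (simp add: d_def)
  have g1: "\<gamma> - 1 > 0" using gamma by simp
  have npos: "n > 0" using n3 by (simp add: n_def)
  from decay obtain \<theta>\<^sub>1 \<theta>\<^sub>2 where th: "\<theta>\<^sub>1 > 0" "\<theta>\<^sub>2 > 0"
    and su: "asymp_simeq u (\<lambda>x. norm x powr (- \<theta>\<^sub>1))"
    and sv: "asymp_simeq v (\<lambda>x. norm x powr (- \<theta>\<^sub>2))" by blast
  obtain cu Ru where cu: "cu > 0" "Ru \<ge> 1" and ub: "\<And>x. norm x \<ge> Ru \<Longrightarrow>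
     (1/cu) * norm x powr (- \<theta>\<^sub>1) \<le> u x \<and> u x \<le> cu * norm x powr (- \<theta>\<^sub>1)"
    using simeq_bounds[OF su] by blast
  obtain cv Rv where cv: "cv > 0" "Rv \<ge> 1" and vb: "\<And>x. norm x \<ge> Rv \<Longrightarrow>
     (1/cv) * norm x powr (- \<theta>\<^sub>2) \<le> v x \<and> v x \<le> cv * norm x powr (- \<theta>\<^sub>2)"
    using simeq_bounds[OF sv] by blast
  from c1 obtain C1 where C1: "C1 > 0" "\<And>x. 1 / C1 \<le> c\<^sub>1 x" unfolding double_bounded_def by blast
  from c2 obtain C2 where C2: "C2 > 0" "\<And>x. 1 / C2 \<le> c\<^sub>2 x" unfolding double_bounded_def by blast
  from sol have upos: "\<And>x. u x > 0" and vpos: "\<And>x. v x > 0"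
    and ueq: "AE x in lebesgue. ennreal (u x) =
        ennreal (c\<^sub>1 x) * wolff \<beta> \<gamma> (\<lambda>y. norm y powr \<sigma>\<^sub>1 * v y powr q) x"
    and veq: "AE x in lebesgue. ennreal (v x) =
        ennreal (c\<^sub>2 x) * wolff \<beta> \<gamma> (\<lambda>y. norm y powr \<sigma>\<^sub>2 * u y powr p) x"
    unfolding positive_solution_def by auto

  have stepA: "\<theta>\<^sub>1 \<le> a"
  proof -
    define \<rho>0 where "\<rho>0 = Rv"
    define v0 where "v0 = (1/cv) * (2*\<rho>0) powr (- \<theta>\<^sub>2)"
    define m1 where "m1 = min (\<rho>0 powr \<sigma>\<^sub>1) ((2*\<rho>0) powr \<sigma>\<^sub>1)"
    define m0 where "m0 = m1 * v0 powr q"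
    have r0: "\<rho>0 \<ge> 1" using cv by (simp add: \<rho>0_def)
    have v0: "v0 > 0" using cv r0 by (simp add: v0_def)
    have m1: "m1 > 0" using r0 by (simp add: m1_def)
    have m0: "m0 > 0" using m1 v0 by (simp add: m0_def)
    define A where "A = m0 * VV TYPE('n) * \<rho>0^CARD('n)"
    have A: "A > 0" using m0 r0 VV_pos[where 'n='n] by (simp add: A_def)
    have W: "ennreal ((A * 4 powr (-(real CARD('n) - \<beta> * \<gamma>))) powr (1/(\<gamma>-1)) / 2
           * norm x powr ((0 - (real CARD('n) - \<beta> * \<gamma>))/(\<gamma>-1)))
          \<le> wolff \<beta> \<gamma> (\<lambda>y. norm y powr \<sigma>\<^sub>1 * v y powr q) x"
      if x: "norm x \<ge> 2*\<rho>0" for x :: "real^'n"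
    proof (rule wolff_lower)
      show "0 < norm x" using x r0 by auto
      show "1 < \<gamma>" by (rule gamma)
      show "\<beta> * \<gamma> < real CARD('n)" using bg by (simp add: n_def)
      show "0 < A" by (rule A)
      fix t assume t: "2 * norm x \<le> t" "t \<le> 4 * norm x"
      have "ennreal A \<le> (\<integral>\<^sup>+ y. indicator (ball x t) y * ennreal (norm y powr \<sigma>\<^sub>1 * v y powr q) \<partial>lebesgue)"
        unfolding A_def
      proof (rule annulus_integral)
        show "0 < \<rho>0" using r0 by simp
        show "0 \<le> m0" using m0 by simp
        fix y :: "real^'n" assume y: "\<rho>0 \<le> norm y" "norm y < 2 * \<rho>0"
        have "y \<in> ball x t" using y x t norm_triangle_ineq4[of x y]
          by (auto simp: dist_norm)
        have "v0 \<le> v y"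
        proof -
          have "v0 \<le> (1/cv) * norm y powr (- \<theta>\<^sub>2)"
            unfolding v0_def using y cv th r0 by (intro mult_left_mono powr_mono2') auto
          also have "\<dots> \<le> v y" using vb[of y] y by (simp add: \<rho>0_def)
          finally show ?thesis .
        qed
        hence "v0 powr q \<le> v y powr q" using v0 pq_pos by (intro powr_mono2) auto
        moreover have "m1 \<le> norm y powr \<sigma>\<^sub>1"
        proof (cases "\<sigma>\<^sub>1 \<ge> 0")
          case True
          hence "\<rho>0 powr \<sigma>\<^sub>1 \<le> norm y powr \<sigma>\<^sub>1" using y r0 by (intro powr_mono2) auto
          thus ?thesis by (simp add: m1_def)
        next
          case False
          hence "(2*\<rho>0) powr \<sigma>\<^sub>1 \<le> norm y powr \<sigma>\<^sub>1" using y r0 by (intro powr_mono2') auto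
          thus ?thesis by (simp add: m1_def)
        qed
        ultimately have "m0 \<le> norm y powr \<sigma>\<^sub>1 * v y powr q"
          unfolding m0_def using m1 v0 by (intro mult_mono) auto
        thus "ennreal m0 \<le> indicator (ball x t) y * ennreal (norm y powr \<sigma>\<^sub>1 * v y powr q)"
          using \<open>y \<in> ball x t\<close> by (simp add: ennreal_leI)
      qed
      thus "ennreal (A * norm x powr 0) \<le> (\<integral>\<^sup>+ y. indicator (ball x t) y * ennreal (norm y powr \<sigma>\<^sub>1 * v y powr q) \<partial>lebesgue)"
        using \<open>0 < norm x\<close> by simp
    qed
    define K where "K = 1/C1 * ((A * 4 powr (-(real CARD('n) - \<beta> * \<gamma>))) powr (1/(\<gamma>-1)) / 2)"
    have K: "K > 0" using C1 A by (simp add: K_def)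
    have "- a \<le> - \<theta>\<^sub>1"
    proof (rule exponent_compare[OF K cu(1)])
      fix R :: real
      obtain x :: "real^'n" where x: "norm x \<ge> max R (max (2*\<rho>0) Ru)"
        and eq: "ennreal (u x) = ennreal (c\<^sub>1 x) * wolff \<beta> \<gamma> (\<lambda>y. norm y powr \<sigma>\<^sub>1 * v y powr q) x"
        using AE_large[OF ueq] by blast
      have xp: "norm x > 0" using x r0 by auto
      have ea: "(0 - (real CARD('n) - \<beta> * \<gamma>))/(\<gamma>-1) = -a" by (simp add: a_def d_def n_def minus_divide_left)
      have W': "ennreal ((A * 4 powr (-(real CARD('n) - \<beta> * \<gamma>))) powr (1/(\<gamma>-1)) / 2
           * norm x powr (-a)) \<le> wolff \<beta> \<gamma> (\<lambda>y. norm y powr \<sigma>\<^sub>1 * v y powr q) x"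
        using W[of x] x ea by simp
      have "K * norm x powr (- a) \<le> u x"
        unfolding K_def mult.assoc
        by (rule ennreal_eq_lower[OF eq W']) (use C1 upos[of x] A in auto)
      also have "\<dots> \<le> cu * norm x powr (- \<theta>\<^sub>1)" using ub[of x] x by auto
      finally show "\<exists>r\<ge>R. 0 < r \<and> K * r powr - a \<le> cu * r powr - \<theta>\<^sub>1"
        using x xp by (intro exI[of _ "norm x"]) auto
    qed
    thus ?thesis by simp
  qed

  define E where "E = \<sigma>\<^sub>2 - p * \<theta>\<^sub>1 + real CARD('n)"
  have stepB: "(E - (real CARD('n) - \<beta> * \<gamma>))/(\<gamma>-1) \<le> - \<theta>\<^sub>2"
  proof -
    define \<kappa> where "\<kappa> = min 1 (2 powr (- \<sigma>\<^sub>2))"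
    have \<kappa>: "\<kappa> > 0" by (simp add: \<kappa>_def)
    define A where "A = \<kappa> * (1/cu) powr p * VV TYPE('n) / 2^CARD('n)"
    have A: "A > 0" using \<kappa> cu VV_pos[where 'n='n] by (simp add: A_def)
    have W: "ennreal ((A * 4 powr (-(real CARD('n) - \<beta> * \<gamma>))) powr (1/(\<gamma>-1)) / 2
           * norm x powr ((E - (real CARD('n) - \<beta> * \<gamma>))/(\<gamma>-1)))
          \<le> wolff \<beta> \<gamma> (\<lambda>y. norm y powr \<sigma>\<^sub>2 * u y powr p) x"
      if x: "norm x \<ge> 2*Ru" for x :: "real^'n"
    proof (rule wolff_lower)
      define r where "r = norm x"
      have r: "r > 0" "r \<ge> 2*Ru" using x cu by (auto simp: r_def)
      show "0 < norm x" using r by (simp add: r_def)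
      show "1 < \<gamma>" by (rule gamma)
      show "\<beta> * \<gamma> < real CARD('n)" using bg by (simp add: n_def)
      show "0 < A" by (rule A)
      fix t assume t: "2 * norm x \<le> t" "t \<le> 4 * norm x"
      define m where "m = \<kappa> * r powr \<sigma>\<^sub>2 * ((1/cu) * r powr (- \<theta>\<^sub>1)) powr p"
      have m: "m \<ge> 0" using \<kappa> by (simp add: m_def)
      have "ennreal (m * VV TYPE('n) * (r/2)^CARD('n)) \<le> (\<integral>\<^sup>+ y. indicator (ball x t) y * ennreal (norm y powr \<sigma>\<^sub>2 * u y powr p) \<partial>lebesgue)"
      proof (rule annulus_integral)
        show "0 < r/2" using r by simp
        show "0 \<le> m" by (rule m)
        fix y :: "real^'n" assume y: "r/2 \<le> norm y" "norm y < 2 * (r/2)"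
        have "y \<in> ball x t" using y t norm_triangle_ineq4[of x y]
          by (auto simp: dist_norm r_def)
        have yp: "norm y > 0" using y r by auto
        have "(1/cu) * r powr (- \<theta>\<^sub>1) \<le> u y"
        proof -
          have "(1/cu) * r powr (- \<theta>\<^sub>1) \<le> (1/cu) * norm y powr (- \<theta>\<^sub>1)"
            using y cu th yp by (intro mult_left_mono powr_mono2') auto
          also have "\<dots> \<le> u y" using ub[of y] y r by auto
          finally show ?thesis .
        qed
        hence "((1/cu) * r powr (- \<theta>\<^sub>1)) powr p \<le> u y powr p" using cu pq_pos by (intro powr_mono2) auto
        moreover have "\<kappa> * r powr \<sigma>\<^sub>2 \<le> norm y powr \<sigma>\<^sub>2"
        proof (cases "\<sigma>\<^sub>2 \<ge> 0")
          case True
          hence "(r/2) powr \<sigma>\<^sub>2 \<le> norm y powr \<sigma>\<^sub>2" using y r by (intro powr_mono2) auto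
          moreover have "(r/2) powr \<sigma>\<^sub>2 = 2 powr (- \<sigma>\<^sub>2) * r powr \<sigma>\<^sub>2"
            using r by (simp add: powr_divide powr_minus divide_simps)
          moreover have "\<kappa> * r powr \<sigma>\<^sub>2 \<le> 2 powr (- \<sigma>\<^sub>2) * r powr \<sigma>\<^sub>2"
            by (intro mult_right_mono) (auto simp: \<kappa>_def)
          ultimately show ?thesis by simp
        next
          case False
          hence "r powr \<sigma>\<^sub>2 \<le> norm y powr \<sigma>\<^sub>2" using y yp by (intro powr_mono2') auto
          moreover have "\<kappa> * r powr \<sigma>\<^sub>2 \<le> 1 * r powr \<sigma>\<^sub>2"
            by (intro mult_right_mono) (auto simp: \<kappa>_def)
          ultimately show ?thesis by simp
        qed
        ultimately have "m \<le> norm y powr \<sigma>\<^sub>2 * u y powr p"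
          unfolding m_def using \<kappa> by (intro mult_mono) auto
        thus "ennreal m \<le> indicator (ball x t) y * ennreal (norm y powr \<sigma>\<^sub>2 * u y powr p)"
          using \<open>y \<in> ball x t\<close> by (simp add: ennreal_leI)
      qed
      moreover have "m * VV TYPE('n) * (r/2)^CARD('n) = A * norm x powr E"
      proof -
        have e1: "((1/cu) * r powr (- \<theta>\<^sub>1)) powr p = (1/cu) powr p * r powr (- (\<theta>\<^sub>1 * p))"
          using cu r by (subst powr_mult) (auto simp: powr_powr)
        have e2: "(r/2)^CARD('n) = r powr (real CARD('n)) / 2^CARD('n)"
          using r by (simp add: powr_realpow power_divide)
        have e3: "r powr \<sigma>\<^sub>2 * r powr (- (\<theta>\<^sub>1 * p)) * r powr (real CARD('n)) = r powr E"
          by (simp add: E_def powr_add[symmetric] algebra_simps)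
        show ?thesis unfolding m_def e1 e2 A_def r_def[symmetric] e3[symmetric]
          by (simp add: field_simps)
      qed
      ultimately show "ennreal (A * norm x powr E) \<le> (\<integral>\<^sup>+ y. indicator (ball x t) y * ennreal (norm y powr \<sigma>\<^sub>2 * u y powr p) \<partial>lebesgue)"
        by simp
    qed
    define K where "K = 1/C2 * ((A * 4 powr (-(real CARD('n) - \<beta> * \<gamma>))) powr (1/(\<gamma>-1)) / 2)"
    have K: "K > 0" using C2 A by (simp add: K_def)
    show ?thesis
    proof (rule exponent_compare[OF K cv(1)])
      fix R :: real
      obtain x :: "real^'n" where x: "norm x \<ge> max R (max (2*Ru) Rv)"
        and eq: "ennreal (v x) = ennreal (c\<^sub>2 x) * wolff \<beta> \<gamma> (\<lambda>y. norm y powr \<sigma>\<^sub>2 * u y powr p) x"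
        using AE_large[OF veq] by blast
      have xp: "norm x > 0" using x cu by auto
      have "K * norm x powr ((E - (real CARD('n) - \<beta> * \<gamma>))/(\<gamma>-1)) \<le> v x"
        unfolding K_def mult.assoc
        by (rule ennreal_eq_lower[OF eq W]) (use C2 vpos[of x] A x in auto)
      also have "\<dots> \<le> cv * norm x powr (- \<theta>\<^sub>2)" using vb[of x] x cv by auto
      finally show "\<exists>r\<ge>R. 0 < r \<and> K * r powr ((E - (real CARD('n) - \<beta> * \<gamma>))/(\<gamma>-1)) \<le> cv * r powr - \<theta>\<^sub>2"
        using x xp by (intro exI[of _ "norm x"]) auto
    qed
  qed

  have Eeq: "E - (real CARD('n) - \<beta> * \<gamma>) = \<sigma>\<^sub>2 - p * \<theta>\<^sub>1 + \<beta> * \<gamma>"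
    by (simp add: E_def)
  have B2: "\<sigma>\<^sub>2 - p * \<theta>\<^sub>1 + \<beta> * \<gamma> \<le> - \<theta>\<^sub>2 * (\<gamma> - 1)"
    using stepB g1 unfolding Eeq by (simp add: divide_le_eq)
  have pa: "p * \<theta>\<^sub>1 \<le> p * (n - \<beta> * \<gamma>) / (\<gamma> - 1)"
  proof -
    have "p * \<theta>\<^sub>1 \<le> p * ((n - \<beta> * \<gamma>) / (\<gamma> - 1))"
      using stepA pq_pos by (intro mult_left_mono) (auto simp: a_def d_def)
    thus ?thesis by simp
  qed
  have up: "\<theta>\<^sub>2 * (\<gamma> - 1) \<le> k" using B2 pa by (simp add: k_def algebra_simps)
  have kpos: "k > 0" using up th g1 by (smt (verit) mult_pos_pos)
  have kd: "k < n - \<beta> * \<gamma>" using hyp by (simp add: k_def)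
  have low: "k \<le> \<theta>\<^sub>2 * (\<gamma> - 1)"
  proof (rule ccontr)
    assume "\<not> ?thesis"
    hence lt: "\<theta>\<^sub>2 * (\<gamma> - 1) < k" by simp
    define S0 where "S0 = max (n * (\<gamma> - 1) / (n - \<beta> * \<gamma>)) (n * (\<gamma> - 1) / k)"
    have s1: "n * (\<gamma> - 1) / (n - \<beta> * \<gamma>) < n / \<theta>\<^sub>2"
    proof -
      have "\<theta>\<^sub>2 * (\<gamma> - 1) < n - \<beta> * \<gamma>" using lt kd by simp
      hence "n * (\<theta>\<^sub>2 * (\<gamma> - 1)) < n * (n - \<beta> * \<gamma>)" using npos by simp
      thus ?thesis using th dpos npos by (simp add: d_def field_simps)
    qed
    have s2: "n * (\<gamma> - 1) / k < n / \<theta>\<^sub>2"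
    proof -
      have "n * (\<theta>\<^sub>2 * (\<gamma> - 1)) < n * k" using lt npos by simp
      thus ?thesis using th kpos npos by (simp add: field_simps)
    qed
    have S0: "S0 < n / \<theta>\<^sub>2" using s1 s2 by (simp add: S0_def)
    have "n * (\<gamma> - 1) / (n - \<beta> * \<gamma>) > 0" using npos g1 dpos by (simp add: d_def)
    hence S0p: "S0 > 0" by (simp add: S0_def)
    define N2 where "N2 = n / \<theta>\<^sub>2"
    define s where "s = (S0 + N2) / 2"
    have sS: "s > S0" "s < n / \<theta>\<^sub>2" using S0 unfolding s_def N2_def[symmetric] by auto
    have spos: "s > 0" using sS S0p by simp
    have "in_Lp s v" using optint_v sS(1) by (simp add: S0_def k_def)
    hence int: "integrable lebesgue (\<lambda>x. \<bar>v x\<bar> powr s)" by (simp add: in_Lp_def)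
    show False
    proof (rule not_integrable_power[OF _ _ _ _ int])
      show "0 < (1/cv) powr s" using cv by simp
      show "0 \<le> \<theta>\<^sub>2 * s" using th spos by simp
      show "\<theta>\<^sub>2 * s < real CARD('n)" using sS th by (simp add: n_def field_simps)
      fix y :: "real^'n" assume y: "Rv \<le> norm y"
      have yp: "norm y > 0" using y cv by auto
      have "(1/cv) * norm y powr (- \<theta>\<^sub>2) \<le> \<bar>v y\<bar>" using vb[of y] y by auto
      hence "((1/cv) * norm y powr (- \<theta>\<^sub>2)) powr s \<le> \<bar>v y\<bar> powr s"
        using cv spos by (intro powr_mono2) auto
      moreover have "((1/cv) * norm y powr (- \<theta>\<^sub>2)) powr s = (1/cv) powr s * norm y powr (- (\<theta>\<^sub>2 * s))"
        using cv yp by (subst powr_mult) (auto simp: powr_powr)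
      ultimately show "(1/cv) powr s * norm y powr (- (\<theta>\<^sub>2 * s)) \<le> \<bar>v y\<bar> powr s" by simp
    qed
  qed
  have "\<theta>\<^sub>2 = k / (\<gamma> - 1)" using up low g1 by (simp add: field_simps)
  thus ?thesis using sv by (simp add: k_def)
qed

end
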